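(* Let $1\le k<n$ and let $P,Q\in\mathbb{H}_n$ be rank-$k$ orthogonal projections. Then $\operatorname{span}_{\mathbb{R}}S^{\mathbb{H}}(P)=\operatorname{span}_{\mathbb{R}}S^{\mathbb{H}}(Q)$ if and only if either $P=Q$, or $n=2k$ and $P=I-Q$.
   Context: $\mathbb{H}_n$ is the real space of $n\times n$ Hermitian matrices. $w_k(A)=\max\{|\operatorname{tr}(AP)|: P=P^*=P^2,\operatorname{tr}P=k\}$. For a rank-$k$ orthogonal projection $P$, $S^{\mathbb{H}}(P)=\{B\in\mathbb{H}_n:\operatorname{tr}(BP)=w_k(B)\}$. *)

theory Defs
  imports "HOL-Analysis.Analysis"
begin

text \<open>Complex n x n matrices, with n = CARD('n).\<close>

definition hermitian :: "complex^'n^'n \<Rightarrow> bool" where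
  "hermitian A \<longleftrightarrow> (\<forall>i j. A $ i $ j = cnj (A $ j $ i))"

definition mtrace :: "complex^'n^'n \<Rightarrow> complex" where
  "mtrace A = (\<Sum>i\<in>UNIV. A $ i $ i)"

definition orth_proj :: "nat \<Rightarrow> complex^'n^'n \<Rightarrow> bool" where
  "orth_proj k P \<longleftrightarrow> hermitian P \<and> P ** P = P \<and> mtrace P = of_nat k"

text \<open>The k-numerical radius w_k(A) = max |tr(AP)| over rank-k orthogonal projections
  (the maximum is attained, so it equals the supremum).\<close>
definition wk :: "nat \<Rightarrow> complex^'n^'n \<Rightarrow> real" where
  "wk k A = (SUP P\<in>{P. orth_proj k P}. cmod (mtrace (A ** P)))"

definition SH :: "nat \<Rightarrow> complex^'n^'n \<Rightarrow> (complex^'n^'n) set" where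
  "SH k P = {B. hermitian B \<and> mtrace (B ** P) = complex_of_real (wk k B)}"

end

theory Submission imports Defs begin

definition adj :: "complex^'n^'n \<Rightarrow> complex^'n^'n" where
  "adj A = (\<chi> i j. cnj (A$j$i))"
definition ip :: "complex^'n \<Rightarrow> complex^'n \<Rightarrow> complex" where
  "ip x y = (\<Sum>i\<in>UNIV. cnj (x$i) * y$i)"
definition outer :: "complex^'n \<Rightarrow> complex^'n \<Rightarrow> complex^'n^'n" where
  "outer x y = (\<chi> i j. x$i * cnj (y$j))"
definition col :: "'n \<Rightarrow> complex^'n^'n \<Rightarrow> complex^'n" where
  "col j A = (\<chi> i. A$i$j)"
definition mbound :: "complex^'n^'n \<Rightarrow> real" where
  "mbound B = (\<Sum>i\<in>UNIV. \<Sum>j\<in>UNIV. cmod (B$i$j))"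

lemma herm_adj: "hermitian A \<longleftrightarrow> adj A = A"
  unfolding hermitian_def adj_def vec_eq_iff by (simp add: eq_commute)

lemma adj_adj[simp]: "adj (adj A) = A"
  by (simp add: adj_def vec_eq_iff)

lemma adj_mult: "adj (A ** B) = adj B ** adj A"
  by (simp add: adj_def vec_eq_iff matrix_matrix_mult_def mult.commute)

lemma adj_add: "adj (A + B) = adj A + adj B"
  by (simp add: adj_def vec_eq_iff)
lemma adj_diff: "adj (A - B) = adj A - adj B"
  by (simp add: adj_def vec_eq_iff)
lemma adj_mat1[simp]: "adj (mat 1) = mat 1"
  by (simp add: adj_def vec_eq_iff mat_def)
lemma adj_outer: "adj (outer x y) = outer y x"
  by (simp add: adj_def vec_eq_iff outer_def)

lemma mtrace_add: "mtrace (A + B) = mtrace A + mtrace B"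
  by (simp add: mtrace_def sum.distrib)
lemma mtrace_diff: "mtrace (A - B) = mtrace A - mtrace B"
  by (simp add: mtrace_def sum_subtractf)
lemma mtrace_comm: "mtrace (A ** B) = mtrace (B ** A)"
proof -
  have "mtrace (A ** B) = (\<Sum>i\<in>UNIV. \<Sum>j\<in>UNIV. A$i$j * B$j$i)"
    by (simp add: mtrace_def matrix_matrix_mult_def)
  also have "\<dots> = (\<Sum>j\<in>UNIV. \<Sum>i\<in>UNIV. A$i$j * B$j$i)"
    by (rule sum.swap)
  also have "\<dots> = mtrace (B ** A)"
    by (simp add: mtrace_def matrix_matrix_mult_def mult.commute)
  finally show ?thesis .
qed
lemma mtrace_adj: "mtrace (adj A) = cnj (mtrace A)"
  by (simp add: mtrace_def adj_def)
lemma mtrace_mat1: "mtrace (mat 1 :: complex^'n^'n) = of_nat CARD('n)"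
  by (simp add: mtrace_def mat_def)

lemma herm_trace_real:
  assumes "hermitian A" "hermitian B"
  shows "cnj (mtrace (A ** B)) = mtrace (A ** B)"
proof -
  have "cnj (mtrace (A ** B)) = mtrace (adj (A ** B))" by (simp add: mtrace_adj)
  also have "\<dots> = mtrace (B ** A)" using assms by (simp add: adj_mult herm_adj)
  also have "\<dots> = mtrace (A ** B)" by (rule mtrace_comm)
  finally show ?thesis .
qed

lemma herm_trace_Im:
  assumes "hermitian A" "hermitian B"
  shows "Im (mtrace (A ** B)) = 0"
  using herm_trace_real[OF assms] by (metis Reals_cnj_iff complex_is_Real_iff)

lemma herm_trace_ofreal:
  assumes "hermitian A" "hermitian B"
  shows "mtrace (A ** B) = of_real (Re (mtrace (A ** B)))"
  using herm_trace_Im[OF assms] by (simp add: complex_eq_iff)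

lemma gram_diag: "(V ** adj V)$i$i = of_real (\<Sum>l\<in>UNIV. (cmod (V$i$l))^2)"
proof -
  have "(V ** adj V)$i$i = (\<Sum>l\<in>UNIV. V$i$l * cnj (V$i$l))"
    by (simp add: matrix_matrix_mult_def adj_def)
  also have "\<dots> = (\<Sum>l\<in>UNIV. of_real ((cmod (V$i$l))^2))"
    by (simp only: complex_norm_square)
  finally show ?thesis by (simp only: of_real_sum)
qed

lemma gram_trace: "Re (mtrace (V ** adj V)) = (\<Sum>i\<in>UNIV. \<Sum>l\<in>UNIV. (cmod (V$i$l))^2)"
  by (simp add: mtrace_def gram_diag)

lemma gram_trace_nonneg: "0 \<le> Re (mtrace (V ** adj V))"
  by (simp add: gram_trace sum_nonneg)

lemma amgm2: "(x::real) * y \<le> (x^2 + y^2) / 2"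
proof -
  have "0 \<le> (x - y)^2" by simp
  then show ?thesis by (simp add: power2_eq_square algebra_simps)
qed

lemma gram_row_le: "(\<Sum>l\<in>UNIV. (cmod (V$m$l))^2) \<le> Re (mtrace (V ** adj V))"
proof -
  have "(\<Sum>l\<in>UNIV. (cmod (V$m$l))^2) \<le> (\<Sum>i\<in>UNIV. \<Sum>l\<in>UNIV. (cmod (V$i$l))^2)"
    by (rule member_le_sum) (auto intro: sum_nonneg)
  then show ?thesis by (simp only: gram_trace)
qed

lemma gram_entry:
  "cmod ((V ** adj V)$i$j) \<le> Re (mtrace (V ** adj V))"
proof -
  have e: "(V ** adj V)$i$j = (\<Sum>l\<in>UNIV. V$i$l * cnj (V$j$l))"
    by (simp add: matrix_matrix_mult_def adj_def)
  have "cmod (\<Sum>l\<in>UNIV. V$i$l * cnj (V$j$l)) \<le> (\<Sum>l\<in>UNIV. cmod (V$i$l * cnj (V$j$l)))"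
    by (rule norm_sum)
  also have "\<dots> = (\<Sum>l\<in>UNIV. cmod (V$i$l) * cmod (V$j$l))"
    by (simp add: norm_mult)
  also have "\<dots> \<le> (\<Sum>l\<in>UNIV. ((cmod (V$i$l))^2 + (cmod (V$j$l))^2) / 2)"
    by (rule sum_mono) (rule amgm2)
  also have "\<dots> = ((\<Sum>l\<in>UNIV. (cmod (V$i$l))^2) + (\<Sum>l\<in>UNIV. (cmod (V$j$l))^2)) / 2"
    by (simp only: sum_divide_distrib[symmetric] sum.distrib)
  also have "\<dots> \<le> Re (mtrace (V ** adj V))"
    using gram_row_le[of V i] gram_row_le[of V j] by simp
  finally show ?thesis by (simp only: e)
qed

lemma trace_bound:
  "cmod (mtrace (B ** (V ** adj V))) \<le> mbound B * Re (mtrace (V ** adj V))"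
proof -
  let ?A = "V ** adj V" and ?T = "Re (mtrace (V ** adj V))"
  have "cmod (mtrace (B ** ?A)) = cmod (\<Sum>i\<in>UNIV. \<Sum>j\<in>UNIV. B$i$j * ?A$j$i)"
    unfolding mtrace_def by (simp add: matrix_matrix_mult_def)
  also have "\<dots> \<le> (\<Sum>i\<in>UNIV. \<Sum>j\<in>UNIV. cmod (B$i$j) * cmod (?A$j$i))"
    by (rule order_trans[OF norm_sum], rule sum_mono, rule order_trans[OF norm_sum], simp add: norm_mult)
  also have "\<dots> \<le> (\<Sum>i\<in>UNIV. \<Sum>j\<in>UNIV. cmod (B$i$j) * ?T)"
    by (intro sum_mono mult_left_mono gram_entry) auto
  also have "\<dots> = mbound B * ?T"
    by (simp add: mbound_def sum_distrib_right)
  finally show ?thesis .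
qed

lemma mbound_nonneg: "0 \<le> mbound B"
  by (simp add: mbound_def sum_nonneg)


lemma mdiff_ldistrib: "(A::complex^'n^'n) ** (B - C) = A ** B - A ** C"
  by (simp add: matrix_matrix_mult_def vec_eq_iff sum_subtractf algebra_simps)
lemma mdiff_rdistrib: "((B::complex^'n^'n) - C) ** A = B ** A - C ** A"
  by (simp add: matrix_matrix_mult_def vec_eq_iff sum_subtractf algebra_simps)
lemma madd_rdistrib: "((B::complex^'n^'n) + C) ** A = B ** A + C ** A"
  by (simp add: matrix_matrix_mult_def vec_eq_iff sum.distrib algebra_simps)

lemma herm_add: "hermitian A \<Longrightarrow> hermitian B \<Longrightarrow> hermitian (A + B)"
  by (simp add: herm_adj adj_add)
lemma herm_diff: "hermitian A \<Longrightarrow> hermitian B \<Longrightarrow> hermitian (A - B)"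
  by (simp add: herm_adj adj_diff)
lemma herm_mat1: "hermitian (mat 1 :: complex^'n^'n)"
  by (simp add: herm_adj)
lemma herm_zero: "hermitian (0 :: complex^'n^'n)"
  by (simp add: hermitian_def)
lemma adj_scaleR: "adj (c *\<^sub>R A) = c *\<^sub>R adj A"
  by (simp add: adj_def vec_eq_iff)
lemma herm_scaleR: "hermitian A \<Longrightarrow> hermitian (c *\<^sub>R A)"
  by (simp add: herm_adj adj_scaleR)
lemma herm_outer: "hermitian (outer x x)"
  by (simp add: herm_adj adj_outer)

lemma mtrace_scaleR: "mtrace (c *\<^sub>R A) = of_real c * mtrace A"
  by (simp add: mtrace_def sum_distrib_left) (simp add: scaleR_conv_of_real)
lemma mtrace_outer: "mtrace (A ** outer x y) = ip y (A *v x)"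
  by (simp add: mtrace_def ip_def outer_def matrix_matrix_mult_def matrix_vector_mult_def
      sum_distrib_left mult_ac)
lemma mtrace_outer1: "mtrace (outer x y) = ip y x"
  using mtrace_outer[of "mat 1" x y] by simp

lemma mult_outer_left: "A ** outer x y = outer (A *v x) y"
  by (simp add: outer_def matrix_matrix_mult_def matrix_vector_mult_def vec_eq_iff
      sum_distrib_right sum_distrib_left mult_ac)
lemma mult_outer_right: "outer x y ** A = outer x (adj A *v y)"
  by (simp add: outer_def matrix_matrix_mult_def matrix_vector_mult_def vec_eq_iff adj_def
      sum_distrib_left mult_ac)
lemma outer_zero_left[simp]: "outer 0 y = 0"
  by (simp add: outer_def vec_eq_iff)
lemma outer_zero_right[simp]: "outer x 0 = 0"
  by (simp add: outer_def vec_eq_iff)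
lemma outer_mult_vec: "outer x y *v v = ip y v *s x"
  by (simp add: outer_def ip_def matrix_vector_mult_def vec_eq_iff sum_distrib_left mult_ac)

lemma ip_add_left: "ip (x + y) z = ip x z + ip y z"
  by (simp add: ip_def sum.distrib algebra_simps)
lemma ip_add_right: "ip z (x + y) = ip z x + ip z y"
  by (simp add: ip_def sum.distrib algebra_simps)
lemma ip_diff_right: "ip z (x - y) = ip z x - ip z y"
  by (simp add: ip_def sum_subtractf algebra_simps)
lemma ip_scale_left: "ip (c *s x) y = cnj c * ip x y"
  by (simp add: ip_def sum_distrib_left mult_ac)
lemma ip_scale_right: "ip x (c *s y) = c * ip x y"
  by (simp add: ip_def sum_distrib_left mult_ac)
lemma ip_cnj: "cnj (ip x y) = ip y x"
  by (simp add: ip_def mult.commute)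
lemma ip_zero_right[simp]: "ip x 0 = 0"
  by (simp add: ip_def)
lemma ip_adj: "ip x (A *v y) = ip (adj A *v x) y"
proof -
  have "ip x (A *v y) = (\<Sum>i\<in>UNIV. \<Sum>j\<in>UNIV. cnj (x$i) * A$i$j * y$j)"
    by (simp add: ip_def matrix_vector_mult_def sum_distrib_left mult.assoc)
  also have "\<dots> = (\<Sum>j\<in>UNIV. \<Sum>i\<in>UNIV. cnj (x$i) * A$i$j * y$j)"
    by (rule sum.swap)
  also have "\<dots> = ip (adj A *v x) y"
    by (simp add: ip_def adj_def matrix_vector_mult_def sum_distrib_right sum_distrib_left mult_ac)
  finally show ?thesis .
qed
lemma ip_self: "ip x x = of_real (\<Sum>i\<in>UNIV. (cmod (x$i))^2)"
proof -
  have "ip x x = (\<Sum>i\<in>UNIV. of_real ((cmod (x$i))^2))"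
    unfolding ip_def by (simp only: complex_norm_square mult.commute)
  then show ?thesis by (simp only: of_real_sum)
qed
lemma ip_self_pos: "x \<noteq> 0 \<Longrightarrow> 0 < Re (ip x x)"
proof -
  assume "x \<noteq> 0"
  then obtain i where i: "x$i \<noteq> 0" by (auto simp: vec_eq_iff)
  have "0 < (cmod (x$i))^2" using i by simp
  also have "\<dots> \<le> (\<Sum>i\<in>UNIV. (cmod (x$i))^2)"
    by (rule member_le_sum) auto
  finally show ?thesis by (simp add: ip_self)
qed
lemma mvec_scale: "(A::complex^'n^'n) *v (c *s x) = c *s (A *v x)"
  unfolding matrix_vector_mult_def vec_eq_iff
  by (auto simp: sum_distrib_left intro!: sum.cong)

lemma col_mult: "col j (A ** B) = A *v col j B"
  by (simp add: col_def matrix_matrix_mult_def matrix_vector_mult_def vec_eq_iff)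
lemma herm_entry_ip: "hermitian Q \<Longrightarrow> (Q ** X)$i$j = ip (col i Q) (col j X)"
proof -
  assume h: "hermitian Q"
  have "(adj Q ** X)$i$j = ip (col i Q) (col j X)"
    by (simp add: matrix_matrix_mult_def ip_def col_def adj_def)
  then show ?thesis using h by (simp add: herm_adj)
qed


lemma op_herm: "orth_proj k P \<Longrightarrow> hermitian P" by (simp add: orth_proj_def)
lemma op_idem: "orth_proj k P \<Longrightarrow> P ** P = P" by (simp add: orth_proj_def)
lemma op_trace: "orth_proj k P \<Longrightarrow> mtrace P = of_nat k" by (simp add: orth_proj_def)
lemma op_gram: "orth_proj k P \<Longrightarrow> P ** adj P = P"
  by (simp add: orth_proj_def herm_adj)

lemma op_trace_bound:
  assumes "orth_proj k R"
  shows "cmod (mtrace (B ** R)) \<le> mbound B * real k"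
  using trace_bound[of B R] op_gram[OF assms] op_trace[OF assms] by simp

lemma wk_upper:
  assumes "orth_proj k R"
  shows "cmod (mtrace (B ** R)) \<le> wk k B"
proof -
  have bdd: "bdd_above ((\<lambda>P. cmod (mtrace (B ** P))) ` {P. orth_proj k P})"
    by (rule bdd_aboveI2[where M="mbound B * real k"]) (simp add: op_trace_bound)
  have "R \<in> {P. orth_proj k P}" using assms by simp
  from cSUP_upper[OF this bdd] show ?thesis unfolding wk_def .
qed

lemma wk_least:
  fixes B P0 :: "complex^'n^'n"
  assumes "orth_proj k P0" "\<And>R. orth_proj k R \<Longrightarrow> cmod (mtrace (B ** R)) \<le> c"
  shows "wk k B \<le> c"
proof -
  have "P0 \<in> {P. orth_proj k P}" using assms(1) by simp
  then have ne: "{P::complex^'n^'n. orth_proj k P} \<noteq> {}" by (metis empty_iff)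
  have le: "\<And>x. x \<in> {P. orth_proj k P} \<Longrightarrow> cmod (mtrace (B ** x)) \<le> c"
    using assms(2) by simp
  from cSUP_least[OF ne le] show ?thesis unfolding wk_def .
qed

lemma SH_ineq:
  assumes "B \<in> SH k P" "orth_proj k R"
  shows "Re (mtrace (B ** R)) \<le> Re (mtrace (B ** P))"
proof -
  have "mtrace (B ** P) = of_real (wk k B)" using assms(1) by (simp add: SH_def)
  then have "Re (mtrace (B ** P)) = wk k B" by simp
  moreover have "Re (mtrace (B ** R)) \<le> cmod (mtrace (B ** R))" by (rule complex_Re_le_cmod)
  ultimately show ?thesis using wk_upper[OF assms(2), of B] by simp
qed

lemma SH_intro:
  assumes B: "hermitian B" and P: "orth_proj k P"
    and le: "\<And>R. orth_proj k R \<Longrightarrow> cmod (mtrace (B ** R)) \<le> Re (mtrace (B ** P))"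
  shows "B \<in> SH k P"
proof -
  have a: "wk k B \<le> Re (mtrace (B ** P))" by (rule wk_least[OF P le])
  have "Re (mtrace (B ** P)) \<le> cmod (mtrace (B ** P))" by (rule complex_Re_le_cmod)
  also have "\<dots> \<le> wk k B" by (rule wk_upper[OF P])
  finally have "wk k B = Re (mtrace (B ** P))" using a by simp
  then have "mtrace (B ** P) = of_real (wk k B)"
    using herm_trace_ofreal[OF B op_herm[OF P]] by simp
  then show ?thesis using B by (simp add: SH_def)
qed

lemma trace_cyc: "mtrace (X ** ((Y ** Z) ** Y)) = mtrace (((Y ** X) ** Y) ** Z)"
proof -
  have "mtrace (X ** ((Y ** Z) ** Y)) = mtrace ((X ** (Y ** Z)) ** Y)" by (simp add: matrix_mul_assoc)
  also have "\<dots> = mtrace (Y ** (X ** (Y ** Z)))" by (rule mtrace_comm)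
  also have "\<dots> = mtrace (((Y ** X) ** Y) ** Z)" by (simp add: matrix_mul_assoc)
  finally show ?thesis .
qed

lemma gram_form:
  assumes "hermitian R" "R ** R = R" "hermitian Y"
  shows "(Y ** R) ** adj (Y ** R) = (Y ** R) ** Y"
proof -
  have "adj (Y ** R) = R ** Y" using assms by (simp add: adj_mult herm_adj)
  then have "(Y ** R) ** adj (Y ** R) = Y ** (R ** R) ** Y" by (simp add: matrix_mul_assoc)
  then show ?thesis using assms(2) by simp
qed

lemma compl_props:
  assumes "hermitian P" "P ** P = P"
  shows "hermitian (mat 1 - P)" "(mat 1 - P) ** (mat 1 - P) = mat 1 - P"
    "P ** (mat 1 - P) = 0" "(mat 1 - P) ** P = 0"
  using assms by (simp_all add: herm_diff herm_mat1 mdiff_ldistrib mdiff_rdistrib)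

lemma comm_SH:
  fixes B P :: "complex^'n^'n"
  assumes B: "hermitian B" and P: "orth_proj k P" and c: "B ** P = P ** B"
    and t: "2 * mbound B \<le> t"
  shows "B + t *\<^sub>R P \<in> SH k P"
proof (rule SH_intro)
  have Ph: "hermitian P" and Pi: "P ** P = P" and Pt: "mtrace P = of_nat k"
    using P by (auto simp: orth_proj_def)
  define Pc where "Pc = mat 1 - P"
  have Pch: "hermitian Pc" and Pci: "Pc ** Pc = Pc"
    using compl_props[OF Ph Pi] by (auto simp: Pc_def)
  have cc: "B ** Pc = Pc ** B" unfolding Pc_def by (simp add: mdiff_ldistrib mdiff_rdistrib c)
  show "hermitian (B + t *\<^sub>R P)" by (intro herm_add herm_scaleR B Ph)
  show "orth_proj k P" by fact
  let ?M = "mbound B"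
  have M0: "0 \<le> ?M" by (rule mbound_nonneg)
  have trBP: "cmod (mtrace (B ** P)) \<le> ?M * real k" by (rule op_trace_bound[OF P])
  fix R :: "complex^'n^'n" assume R: "orth_proj k R"
  have Rh: "hermitian R" and Ri: "R ** R = R" and Rt: "mtrace R = of_nat k"
    using R by (auto simp: orth_proj_def)
  define Rc where "Rc = mat 1 - R"
  have Rch: "hermitian Rc" and Rci: "Rc ** Rc = Rc"
    using compl_props[OF Rh Ri] by (auto simp: Rc_def)
  have trBR: "cmod (mtrace (B ** R)) \<le> ?M * real k" by (rule op_trace_bound[OF R])
  have g1: "(Pc ** R) ** adj (Pc ** R) = (Pc ** R) ** Pc" by (rule gram_form[OF Rh Ri Pch])
  have g2: "(P ** Rc) ** adj (P ** Rc) = (P ** Rc) ** P" by (rule gram_form[OF Rch Rci Ph])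
  have g3: "(P ** R) ** adj (P ** R) = (P ** R) ** P" by (rule gram_form[OF Rh Ri Ph])
  have e1: "mtrace (B ** ((Pc ** R) ** Pc)) = mtrace (B ** R) - mtrace ((B ** P) ** R)"
  proof -
    have "mtrace (B ** ((Pc ** R) ** Pc)) = mtrace (((Pc ** B) ** Pc) ** R)" by (rule trace_cyc)
    also have "(Pc ** B) ** Pc = B ** Pc" by (simp add: cc[symmetric] matrix_mul_assoc[symmetric] Pci)
    also have "mtrace ((B ** Pc) ** R) = mtrace (B ** R) - mtrace ((B ** P) ** R)"
      by (simp add: Pc_def mdiff_ldistrib mdiff_rdistrib mtrace_diff)
    finally show ?thesis .
  qed
  have e2: "mtrace (B ** ((P ** Rc) ** P)) = mtrace (B ** P) - mtrace ((B ** P) ** R)"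
  proof -
    have "mtrace (B ** ((P ** Rc) ** P)) = mtrace (((P ** B) ** P) ** Rc)" by (rule trace_cyc)
    also have "(P ** B) ** P = B ** P" by (simp add: c[symmetric] matrix_mul_assoc[symmetric] Pi)
    also have "mtrace ((B ** P) ** Rc) = mtrace (B ** P) - mtrace ((B ** P) ** R)"
      by (simp add: Rc_def mdiff_ldistrib mtrace_diff)
    finally show ?thesis .
  qed
  have t1: "mtrace ((Pc ** R) ** Pc) = of_nat k - mtrace (P ** R)"
  proof -
    have "mtrace (mat 1 ** ((Pc ** R) ** Pc)) = mtrace (((Pc ** mat 1) ** Pc) ** R)" by (rule trace_cyc)
    then have "mtrace ((Pc ** R) ** Pc) = mtrace (Pc ** R)" using Pci by simp
    also have "\<dots> = of_nat k - mtrace (P ** R)"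
      by (simp add: Pc_def mdiff_rdistrib mtrace_diff Rt)
    finally show ?thesis .
  qed
  have t2: "mtrace ((P ** Rc) ** P) = of_nat k - mtrace (P ** R)"
  proof -
    have "mtrace (mat 1 ** ((P ** Rc) ** P)) = mtrace (((P ** mat 1) ** P) ** Rc)" by (rule trace_cyc)
    then have "mtrace ((P ** Rc) ** P) = mtrace (P ** Rc)" using Pi by simp
    also have "\<dots> = of_nat k - mtrace (P ** R)"
      by (simp add: Rc_def mdiff_ldistrib mtrace_diff Pt)
    finally show ?thesis .
  qed
  have t3: "mtrace ((P ** R) ** P) = mtrace (P ** R)"
  proof -
    have "mtrace (mat 1 ** ((P ** R) ** P)) = mtrace (((P ** mat 1) ** P) ** R)" by (rule trace_cyc)
    then show ?thesis using Pi by simp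
  qed
  define d where "d = real k - Re (mtrace (P ** R))"
  define x where "x = Re (mtrace (B ** R))"
  define y where "y = Re (mtrace (B ** P))"
  define p where "p = Re (mtrace (P ** R))"
  have d0: "0 \<le> d"
    using gram_trace_nonneg[of "Pc ** R"] g1 t1 by (simp add: d_def)
  have p0: "0 \<le> p"
    using gram_trace_nonneg[of "P ** R"] g3 t3 by (simp add: p_def)
  have b1: "cmod (mtrace (B ** ((Pc ** R) ** Pc))) \<le> ?M * d"
    using trace_bound[of B "Pc ** R"] g1 t1 by (simp add: d_def)
  have b2: "cmod (mtrace (B ** ((P ** Rc) ** P))) \<le> ?M * d"
    using trace_bound[of B "P ** Rc"] g2 t2 by (simp add: d_def)
  have "x - y = Re (mtrace (B ** ((Pc ** R) ** Pc))) - Re (mtrace (B ** ((P ** Rc) ** P)))"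
    unfolding e1 e2 x_def y_def by simp
  moreover have "Re (mtrace (B ** ((Pc ** R) ** Pc))) \<le> ?M * d"
    using b1 complex_Re_le_cmod order_trans by blast
  moreover have "- Re (mtrace (B ** ((P ** Rc) ** P))) \<le> ?M * d"
    using b2 abs_Re_le_cmod[of "mtrace (B ** ((P ** Rc) ** P))"] by linarith
  ultimately have xy: "x - y \<le> 2 * ?M * d" by linarith
  have x1: "\<bar>x\<bar> \<le> ?M * real k" using trBR abs_Re_le_cmod order_trans unfolding x_def by blast
  have y1: "\<bar>y\<bar> \<le> ?M * real k" using trBP abs_Re_le_cmod order_trans unfolding y_def by blast
  have pd: "p = real k - d" by (simp add: p_def d_def)
  have m1: "2 * ?M * d \<le> t * d" using t d0 by (simp add: mult_right_mono)
  have m2: "2 * ?M * real k \<le> t * real k" using t by (simp add: mult_right_mono)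
  have m3: "0 \<le> t * p" using t M0 p0 by simp
  have tp: "t * p = t * real k - t * d" by (simp add: pd right_diff_distrib)
  have CR: "Re (mtrace ((B + t *\<^sub>R P) ** R)) = x + t * p"
    by (simp add: madd_rdistrib mtrace_add x_def p_def scalar_matrix_assoc[symmetric] mtrace_scaleR)
  have CP: "Re (mtrace ((B + t *\<^sub>R P) ** P)) = y + t * real k"
    by (simp add: madd_rdistrib mtrace_add y_def scalar_matrix_assoc[symmetric] mtrace_scaleR Pi Pt)
  have "\<bar>x + t * p\<bar> \<le> y + t * real k"
    using xy x1 y1 m1 m2 m3 tp unfolding abs_le_iff by linarith
  moreover have "Im (mtrace ((B + t *\<^sub>R P) ** R)) = 0"
    by (rule herm_trace_Im) (intro herm_add herm_scaleR B Ph, rule Rh)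
  ultimately show "cmod (mtrace ((B + t *\<^sub>R P) ** R)) \<le> Re (mtrace ((B + t *\<^sub>R P) ** P))"
    using CR CP by (simp add: cmod_eq_Re)
qed

definition commutant :: "complex^'n^'n \<Rightarrow> (complex^'n^'n) set" where
  "commutant P = {B. hermitian B \<and> B ** P = P ** B}"

lemma commutant_sub_span:
  fixes P :: "complex^'n^'n"
  assumes P: "orth_proj k P"
  shows "commutant P \<subseteq> span (SH k P)"
proof
  fix B assume "B \<in> commutant P"
  then have B: "hermitian B" and c: "B ** P = P ** B" by (auto simp: commutant_def)
  define t where "t = 2 * mbound B"
  have C: "B + t *\<^sub>R P \<in> SH k P" by (rule comm_SH[OF B P c]) (simp add: t_def)
  have "(0::complex^'n^'n) + (1::real) *\<^sub>R P \<in> SH k P" by (rule comm_SH[OF herm_zero P]) (simp_all add: mbound_def)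
  then have PS: "P \<in> SH k P" by simp
  have "B = (B + t *\<^sub>R P) - t *\<^sub>R P" by simp
  also have "\<dots> \<in> span (SH k P)"
    by (intro span_diff span_scale span_base C PS)
  finally show "B \<in> span (SH k P)" .
qed


lemma ip_zero_left[simp]: "ip 0 x = 0"
  by (simp add: ip_def)
lemma adj_zero[simp]: "adj 0 = 0"
  by (simp add: adj_def vec_eq_iff)
lemma col_zero[simp]: "col j 0 = 0"
  by (simp add: col_def vec_eq_iff)

lemma ip_herm_move:
  assumes "hermitian A"
  shows "ip (A *v x) y = ip x (A *v y)"
  using assms by (simp add: ip_adj herm_adj)

lemma rank_one_update:
  fixes P :: "complex^'n^'n"
  assumes Ph: "hermitian P" and Pi: "P ** P = P"
    and aa: "ip a a = 1" and ww: "ip w w = 1" and Pa: "P *v a = a" and Pw: "P *v w = ip a w *s a"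
  shows "hermitian (P - outer a a + outer w w)"
    "(P - outer a a + outer w w) ** (P - outer a a + outer w w) = P - outer a a + outer w w"
    "mtrace (P - outer a a + outer w w) = mtrace P"
proof -
  define P' where "P' = P - outer a a"
  define W where "W = outer w w"
  have P'h: "hermitian P'" unfolding P'_def by (intro herm_diff Ph herm_outer)
  have Wh: "hermitian W" unfolding W_def by (rule herm_outer)
  have P'w: "P' *v w = 0"
    unfolding P'_def by (simp add: matrix_vector_mult_diff_rdistrib Pw outer_mult_vec)
  have PO: "P ** outer a a = outer a a" by (simp add: mult_outer_left Pa)
  have OP: "outer a a ** P = outer a a"
    using Ph by (simp add: mult_outer_right herm_adj Pa)
  have OO: "outer a a ** outer a a = outer a a"
    by (simp add: mult_outer_left outer_mult_vec aa)
  have P'P': "P' ** P' = P'"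
    unfolding P'_def by (simp add: mdiff_ldistrib mdiff_rdistrib Pi PO OP OO)
  have P'W: "P' ** W = 0" unfolding W_def by (simp add: mult_outer_left P'w)
  have WP': "W ** P' = 0"
    using P'h unfolding W_def by (simp add: mult_outer_right herm_adj P'w)
  have WW: "W ** W = W" unfolding W_def by (simp add: mult_outer_left outer_mult_vec ww)
  show "hermitian (P - outer a a + outer w w)"
    using P'h Wh by (simp add: P'_def W_def herm_add)
  have "(P' + W) ** (P' + W) = P' + W"
    by (simp add: matrix_add_ldistrib madd_rdistrib P'P' P'W WP' WW)
  then show "(P - outer a a + outer w w) ** (P - outer a a + outer w w) = P - outer a a + outer w w"
    by (simp add: P'_def W_def)
  show "mtrace (P - outer a a + outer w w) = mtrace P"
    by (simp add: mtrace_add mtrace_diff mtrace_outer1 aa ww)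
qed

lemma real_ineq_aux:
  fixes s m al be :: real
  assumes m: "0 < m" and s: "s = m / (\<bar>be - al\<bar> + 1)"
  shows "al < (al + 2 * s * m + s * s * be) / (1 + s * s)"
proof -
  have D: "0 < \<bar>be - al\<bar> + 1" by simp
  have s0: "0 < s" using m D s by simp
  have sD: "s * (\<bar>be - al\<bar> + 1) = m" using D s by simp
  have h1: "s * \<bar>be - al\<bar> < m" using sD s0 by (simp add: algebra_simps)
  have h2: "s * (s * \<bar>be - al\<bar>) \<le> s * m" using h1 s0 by (simp add: mult_left_mono)
  have h3: "- (s * (s * \<bar>be - al\<bar>)) \<le> s * (s * (be - al))"
  proof -
    have "- \<bar>be - al\<bar> \<le> be - al" by simp
    moreover have "0 \<le> s * s" by simp
    ultimately have "s * s * (- \<bar>be - al\<bar>) \<le> s * s * (be - al)" by (rule mult_left_mono)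
    then show ?thesis by (simp add: algebra_simps)
  qed
  have h4: "0 < s * m" using s0 m by simp
  have "al * (1 + s * s) < al + 2 * s * m + s * s * be"
    using h2 h3 h4 by (simp add: algebra_simps)
  moreover have "0 < 1 + s * s" by (simp add: add_pos_nonneg)
  ultimately show ?thesis by (simp add: less_divide_eq)
qed

lemma improve:
  fixes B P :: "complex^'n^'n" and a b :: "complex^'n"
  assumes B: "hermitian B" and P: "orth_proj k P"
    and aa: "ip a a = 1" and bb: "ip b b = 1" and Pa: "P *v a = a" and Pb: "P *v b = 0"
    and c0: "ip b (B *v a) \<noteq> 0"
  shows "\<exists>R. orth_proj k R \<and> Re (mtrace (B ** P)) < Re (mtrace (B ** R))"
proof -
  have Ph: "hermitian P" and Pi: "P ** P = P" and Pt: "mtrace P = of_nat k"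
    using P by (auto simp: orth_proj_def)
  define c where "c = ip b (B *v a)"
  define m where "m = cmod c"
  have m0: "0 < m" using c0 by (simp add: m_def c_def)
  define al where "al = Re (ip a (B *v a))"
  define be where "be = Re (ip b (B *v b))"
  define s where "s = m / (\<bar>be - al\<bar> + 1)"
  define mu where "mu = 1 / sqrt (1 + s * s)"
  define lam where "lam = complex_of_real (s / m) * c"
  define y where "y = a + lam *s b"
  define w where "w = complex_of_real mu *s y"
  have ab: "ip a b = 0"
  proof -
    have "ip a b = ip (P *v a) b" by (simp add: Pa)
    also have "\<dots> = ip a (P *v b)" by (rule ip_herm_move[OF Ph])
    finally show ?thesis by (simp add: Pb)
  qed
  have ba: "ip b a = 0" using ab ip_cnj[of a b] by simp
  have aBb: "ip a (B *v b) = cnj c"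
  proof -
    have "ip a (B *v b) = ip (B *v a) b" by (rule ip_herm_move[OF B, symmetric])
    also have "\<dots> = cnj c" by (simp add: c_def ip_cnj)
    finally show ?thesis .
  qed
  have ccnj: "c * cnj c = complex_of_real (m * m)"
    unfolding m_def using complex_norm_square[of c] by (simp add: power2_eq_square)
  have l1: "lam * cnj c = complex_of_real (s * m)"
    using m0 by (simp add: lam_def mult.assoc ccnj)
  have l2: "cnj lam * c = complex_of_real (s * m)"
    using m0 by (simp add: lam_def mult.assoc mult.commute[of "cnj c"] ccnj)
  have l3: "cnj lam * lam = complex_of_real (s * s)"
  proof -
    have "cnj lam * lam = complex_of_real ((s / m) * (s / m)) * (c * cnj c)"
      unfolding lam_def by (simp add: mult_ac)
    also have "\<dots> = complex_of_real ((s / m) * (s / m) * (m * m))" by (simp add: ccnj)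
    also have "\<dots> = complex_of_real (s * s)" using m0 by (simp add: field_simps)
    finally show ?thesis .
  qed
  have l3': "lam * cnj lam = complex_of_real (s * s)" using l3 by (simp add: mult.commute)
  have yy: "ip y y = complex_of_real (1 + s * s)"
    unfolding y_def
    by (simp add: ip_add_left ip_add_right ip_scale_left ip_scale_right aa bb ab ba l3 l3' del: of_real_mult)
  have mu2: "mu * mu * (1 + s * s) = 1"
  proof -
    have "0 < 1 + s * s" by (simp add: add_pos_nonneg)
    then have "sqrt (1 + s * s) * sqrt (1 + s * s) = 1 + s * s" by simp
    then show ?thesis unfolding mu_def using \<open>0 < 1 + s * s\<close> by (simp add: field_simps)
  qed
  have ww: "ip w w = 1"
  proof -
    have "ip w w = complex_of_real (mu * mu * (1 + s * s))"
      unfolding w_def by (simp add: ip_scale_left ip_scale_right yy)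
    then show ?thesis using mu2 by simp
  qed
  have Pw: "P *v w = ip a w *s a"
  proof -
    have "P *v w = complex_of_real mu *s a"
      unfolding w_def y_def by (simp add: mvec_scale matrix_vector_right_distrib Pa Pb)
    moreover have "ip a w = complex_of_real mu"
      unfolding w_def y_def by (simp add: ip_scale_right ip_add_right aa ab)
    ultimately show ?thesis by simp
  qed
  define R where "R = P - outer a a + outer w w"
  have Rh: "hermitian R" and Ri: "R ** R = R" and Rt: "mtrace R = mtrace P"
    using rank_one_update[OF Ph Pi aa ww Pa Pw] by (simp_all add: R_def)
  have RP: "orth_proj k R" using Rh Ri Rt Pt by (simp add: orth_proj_def)
  have yBy: "ip y (B *v y) = ip a (B *v a) + lam * cnj c + cnj lam * c + cnj lam * lam * ip b (B *v b)"
    unfolding y_def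
    by (simp add: matrix_vector_right_distrib mvec_scale ip_add_left ip_add_right ip_scale_left
        ip_scale_right aBb c_def algebra_simps)
  have ReyBy: "Re (ip y (B *v y)) = al + 2 * s * m + s * s * be"
    unfolding yBy l1 l2 l3 by (simp add: al_def be_def)
  have wBw: "Re (ip w (B *v w)) = mu * mu * (al + 2 * s * m + s * s * be)"
  proof -
    have "ip w (B *v w) = complex_of_real (mu * mu) * ip y (B *v y)"
      unfolding w_def by (simp add: mvec_scale ip_scale_left ip_scale_right)
    then show ?thesis using ReyBy by simp
  qed
  have trR: "mtrace (B ** R) = mtrace (B ** P) - ip a (B *v a) + ip w (B *v w)"
    unfolding R_def by (simp add: matrix_add_ldistrib mdiff_ldistrib mtrace_add mtrace_diff mtrace_outer)
  have key: "al < mu * mu * (al + 2 * s * m + s * s * be)"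
  proof -
    have "al < (al + 2 * s * m + s * s * be) / (1 + s * s)"
      by (rule real_ineq_aux[OF m0 s_def])
    moreover have "mu * mu = 1 / (1 + s * s)"
    proof -
      have "0 < 1 + s * s" by (simp add: add_pos_nonneg)
      then show ?thesis using mu2 by (simp add: eq_divide_eq)
    qed
    ultimately show ?thesis by simp
  qed
  have "Re (mtrace (B ** P)) < Re (mtrace (B ** R))"
    using key wBw unfolding trR by (simp add: al_def)
  then show ?thesis using RP by blast
qed


lemma normalize:
  fixes x :: "complex^'n"
  assumes "x \<noteq> 0"
  shows "\<exists>r. r \<noteq> 0 \<and> ip (r *s x) (r *s x) = 1"
proof -
  define q where "q = Re (ip x x)"
  have q0: "0 < q" using ip_self_pos[OF assms] by (simp add: q_def)
  have xx: "ip x x = complex_of_real q" by (simp add: q_def ip_self)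
  define r where "r = complex_of_real (1 / sqrt q)"
  have "ip (r *s x) (r *s x) = complex_of_real ((1 / sqrt q) * (1 / sqrt q) * q)"
    by (simp only: r_def ip_scale_left ip_scale_right xx complex_cnj_complex_of_real of_real_mult mult.assoc)
  also have "(1 / sqrt q) * (1 / sqrt q) * q = 1"
  proof -
    have sq: "sqrt q * sqrt q = q" using q0 by simp
    show ?thesis using sq q0 by (simp add: field_simps)
  qed
  finally show ?thesis using q0 by (intro exI[of _ r]) (simp add: r_def)
qed

lemma SH_comm:
  fixes B P :: "complex^'n^'n"
  assumes B: "hermitian B" and P: "orth_proj k P"
    and opt: "\<And>R. orth_proj k R \<Longrightarrow> Re (mtrace (B ** R)) \<le> Re (mtrace (B ** P))"
  shows "B ** P = P ** B"
proof (rule ccontr)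
  assume ne: "B ** P \<noteq> P ** B"
  have Ph: "hermitian P" and Pi: "P ** P = P"
    using P by (auto simp: orth_proj_def)
  define Q where "Q = mat 1 - P"
  have Qh: "hermitian Q" and PQ: "P ** Q = 0"
    using compl_props[OF Ph Pi] by (auto simp: Q_def)
  have PQ1: "P + Q = mat 1" by (simp add: Q_def)
  have nz: "Q ** (B ** P) \<noteq> 0"
  proof
    assume z: "Q ** (B ** P) = 0"
    have "adj (Q ** (B ** P)) = (P ** B) ** Q"
      using Ph Qh B by (simp add: adj_mult herm_adj)
    then have z2: "(P ** B) ** Q = 0" using z by simp
    have "B ** P = (P + Q) ** (B ** P)" by (simp add: PQ1)
    also have "\<dots> = P ** (B ** P)" by (simp add: madd_rdistrib z)
    finally have e1: "B ** P = P ** (B ** P)" .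
    have "P ** B = (P ** B) ** (P + Q)" by (simp add: PQ1)
    also have "\<dots> = (P ** B) ** P" by (simp add: matrix_add_ldistrib z2)
    finally have e2: "P ** B = P ** (B ** P)" by (simp add: matrix_mul_assoc)
    show False using ne e1 e2 by simp
  qed
  then obtain i j where ij: "(Q ** (B ** P))$i$j \<noteq> 0" by (auto simp: vec_eq_iff)
  define p where "p = col j P"
  define q where "q = col i Q"
  have pq: "ip q (B *v p) \<noteq> 0"
    using ij by (simp add: herm_entry_ip[OF Qh] col_mult p_def q_def)
  have Pp: "P *v p = p" unfolding p_def by (simp add: col_mult[symmetric] Pi)
  have Pq: "P *v q = 0" unfolding q_def by (simp add: col_mult[symmetric] PQ)
  have p0: "p \<noteq> 0" using pq by auto
  have q0: "q \<noteq> 0" using pq by auto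
  obtain ra where ra: "ra \<noteq> 0" "ip (ra *s p) (ra *s p) = 1" using normalize[OF p0] by blast
  obtain rb where rb: "rb \<noteq> 0" "ip (rb *s q) (rb *s q) = 1" using normalize[OF q0] by blast
  have Pa: "P *v (ra *s p) = ra *s p" by (simp add: mvec_scale Pp)
  have Pb: "P *v (rb *s q) = 0" by (simp add: mvec_scale Pq)
  have c: "ip (rb *s q) (B *v (ra *s p)) \<noteq> 0"
    using pq ra(1) rb(1) by (simp add: mvec_scale ip_scale_left ip_scale_right)
  obtain R where R: "orth_proj k R" "Re (mtrace (B ** P)) < Re (mtrace (B ** R))"
    using improve[OF B P ra(2) rb(2) Pa Pb c] by blast
  show False using opt[OF R(1)] R(2) by simp
qed

lemma commutant_subspace: "subspace (commutant P)"
  unfolding subspace_def commutant_def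
  by (auto simp: herm_zero herm_add herm_scaleR matrix_add_ldistrib madd_rdistrib
      scalar_matrix_assoc[symmetric] matrix_scalar_ac)

lemma span_SH:
  fixes P :: "complex^'n^'n"
  assumes P: "orth_proj k P"
  shows "span (SH k P) = commutant P"
proof
  have "SH k P \<subseteq> commutant P"
  proof
    fix B assume B: "B \<in> SH k P"
    then have Bh: "hermitian B" by (simp add: SH_def)
    have "B ** P = P ** B"
      by (rule SH_comm[OF Bh P]) (rule SH_ineq[OF B])
    then show "B \<in> commutant P" using Bh by (simp add: commutant_def)
  qed
  then show "span (SH k P) \<subseteq> commutant P"
    by (rule span_minimal) (rule commutant_subspace)
  show "commutant P \<subseteq> span (SH k P)" by (rule commutant_sub_span[OF P])
qed


lemma commutant_compl:
  "commutant (mat 1 - Q) = commutant (Q :: complex^'n^'n)"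
  unfolding commutant_def by (auto simp: mdiff_ldistrib mdiff_rdistrib)

lemma dc:
  fixes P Q :: "complex^'n^'n"
  assumes Ph: "hermitian P" and Pi: "P ** P = P" and Qh: "hermitian Q" and Qi: "Q ** Q = Q"
    and sub: "commutant Q \<subseteq> commutant P"
  shows "P ** Q = 0 \<or> (mat 1 - P) ** Q = 0"
proof (rule ccontr)
  assume "\<not> (P ** Q = 0 \<or> (mat 1 - P) ** Q = 0)"
  then have n1: "P ** Q \<noteq> 0" and n2: "(mat 1 - P) ** Q \<noteq> 0" by auto
  have "Q \<in> commutant Q" using Qh by (simp add: commutant_def)
  then have "Q \<in> commutant P" using sub by blast
  then have QP: "Q ** P = P ** Q" by (simp add: commutant_def)
  obtain i j where ij: "(P ** Q)$i$j \<noteq> 0" using n1 by (auto simp: vec_eq_iff)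
  obtain i' j' where ij': "((mat 1 - P) ** Q)$i'$j' \<noteq> 0" using n2 by (auto simp: vec_eq_iff)
  define x where "x = col j (P ** Q)"
  define y where "y = col j' ((mat 1 - P) ** Q)"
  have x0: "x \<noteq> 0" using ij by (auto simp: x_def col_def vec_eq_iff)
  have y0: "y \<noteq> 0" using ij' by (auto simp: y_def col_def vec_eq_iff)
  have Px: "P *v x = x" unfolding x_def by (simp add: col_mult[symmetric] matrix_mul_assoc Pi)
  have Qx: "Q *v x = x"
  proof -
    have "Q ** (P ** Q) = P ** Q" by (simp add: matrix_mul_assoc QP) (simp add: matrix_mul_assoc[symmetric] Qi)
    then show ?thesis unfolding x_def by (simp add: col_mult[symmetric])
  qed
  have Py: "P *v y = 0"
  proof -
    have "P ** ((mat 1 - P) ** Q) = 0" by (simp add: matrix_mul_assoc mdiff_ldistrib Pi)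
    then show ?thesis unfolding y_def by (simp add: col_mult[symmetric])
  qed
  have Qy: "Q *v y = y"
  proof -
    have "Q ** ((mat 1 - P) ** Q) = (mat 1 - P) ** Q"
      by (simp add: mdiff_ldistrib mdiff_rdistrib matrix_mul_assoc QP) (simp add: matrix_mul_assoc[symmetric] Qi)
    then show ?thesis unfolding y_def by (simp add: col_mult[symmetric])
  qed
  have xy: "ip x y = 0"
  proof -
    have "ip x y = ip (P *v x) y" by (simp add: Px)
    also have "\<dots> = ip x (P *v y)" by (rule ip_herm_move[OF Ph])
    finally show ?thesis by (simp add: Py)
  qed
  define Bm where "Bm = outer x y + outer y x"
  have Bh: "hermitian Bm" by (simp add: Bm_def herm_adj adj_add adj_outer add.commute)
  have "Bm ** Q = Q ** Bm"
    using Qh by (simp add: Bm_def madd_rdistrib matrix_add_ldistrib mult_outer_left mult_outer_right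
        herm_adj Qx Qy)
  then have "Bm \<in> commutant Q" using Bh by (simp add: commutant_def)
  then have "Bm ** P = P ** Bm" using sub by (auto simp: commutant_def)
  then have eq: "outer y x = outer x y"
    using Ph by (simp add: Bm_def madd_rdistrib matrix_add_ldistrib mult_outer_left mult_outer_right
        herm_adj Px Py)
  have "outer y x *v y = 0" by (simp add: outer_mult_vec xy)
  moreover have "outer x y *v y \<noteq> 0"
  proof -
    have "ip y y \<noteq> 0" using ip_self_pos[OF y0] by auto
    then show ?thesis using x0 by (simp add: outer_mult_vec)
  qed
  ultimately show False using eq by simp
qed

theorem mainTheorem10:
  fixes P Q :: "complex^'n^'n" and k :: nat
  assumes "1 \<le> k" and "k < CARD('n)"
    and "orth_proj k P" and "orth_proj k Q"
  shows "span (SH k P) = span (SH k Q) \<longleftrightarrow>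
         (P = Q \<or> (CARD('n) = 2 * k \<and> P = mat 1 - Q))"
proof -
  note P = assms(3) and Q = assms(4)
  have Ph: "hermitian P" and Pi: "P ** P = P" and Pt: "mtrace P = of_nat k"
    using P by (auto simp: orth_proj_def)
  have Qh: "hermitian Q" and Qi: "Q ** Q = Q" and Qt: "mtrace Q = of_nat k"
    using Q by (auto simp: orth_proj_def)
  have Qch: "hermitian (mat 1 - Q)" and Qci: "(mat 1 - Q) ** (mat 1 - Q) = mat 1 - Q"
    using compl_props[OF Qh Qi] by auto
  show ?thesis
    unfolding span_SH[OF P] span_SH[OF Q]
  proof
    assume eq: "commutant P = commutant Q"
    have d1: "P ** Q = 0 \<or> (mat 1 - P) ** Q = 0"
      by (rule dc[OF Ph Pi Qh Qi]) (simp add: eq)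
    have d2: "P ** (mat 1 - Q) = 0 \<or> (mat 1 - P) ** (mat 1 - Q) = 0"
      by (rule dc[OF Ph Pi Qch Qci]) (simp add: eq commutant_compl)
    have e1: "(mat 1 - P) ** Q = Q - P ** Q" by (simp add: mdiff_rdistrib)
    have e2: "P ** (mat 1 - Q) = P - P ** Q" by (simp add: mdiff_ldistrib)
    have e3: "(mat 1 - P) ** (mat 1 - Q) = mat 1 - Q - P + P ** Q"
      by (simp add: mdiff_rdistrib mdiff_ldistrib)
    have trI: "mtrace (mat 1 :: complex^'n^'n) = of_nat CARD('n)" by (rule mtrace_mat1)
    show "P = Q \<or> CARD('n) = 2 * k \<and> P = mat 1 - Q"
    proof (cases "P ** Q = 0")
      case True
      show ?thesis
      proof (cases "P ** (mat 1 - Q) = 0")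
        case True2: True
        then have "P = 0" using True e2 by simp
        then have "mtrace P = 0" by (simp add: mtrace_def)
        then show ?thesis using Pt assms(1) by simp
      next
        case False
        then have "mat 1 - Q - P + P ** Q = 0" using d2 e3 by simp
        then have PQ: "P = mat 1 - Q" using True by (simp add: algebra_simps)
        then have "mtrace P = of_nat CARD('n) - of_nat k" using Qt trI by (simp add: mtrace_diff)
        then have "of_nat (2 * k) = (of_nat CARD('n) :: complex)" using Pt by (simp add: algebra_simps)
        then have "2 * k = CARD('n)" by (simp only: of_nat_eq_iff)
        then show ?thesis using PQ by simp
      qed
    next
      case False
      then have A: "Q - P ** Q = 0" using d1 e1 by simp
      show ?thesis
      proof (cases "P ** (mat 1 - Q) = 0")
        case True
        then have "P - P ** Q = 0" using e2 by simp
        then have "P = Q" using A by simp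
        then show ?thesis by simp
      next
        case False2: False
        then have "mat 1 - Q - P + P ** Q = 0" using d2 e3 by simp
        then have "P = mat 1" using A by (simp add: algebra_simps)
        then have "mtrace P = of_nat CARD('n)" using trI by simp
        then have "(of_nat k :: complex) = of_nat CARD('n)" using Pt by simp
        then have "k = CARD('n)" by (simp only: of_nat_eq_iff)
        then show ?thesis using assms(2) by simp
      qed
    qed
  next
    assume "P = Q \<or> CARD('n) = 2 * k \<and> P = mat 1 - Q"
    then show "commutant P = commutant Q" by (auto simp: commutant_compl)
  qed
qed

end
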